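(* Let $R$ be a commutative domain with field of fractions $F$, let $A=(a_{i,j})\in R^{n\times m}$ have rank $r$, and let $k$ be an integer with $0\le k<r$ such that $\alpha^i\neq 0$ for $i=k,k+1,\dots,r$. Let $s,p$ be integers with $k<s\le n$ and $k<p\le m$. Define $L^k_s=(\alpha^j_{i,j})$ with $i=k+1,\dots,s$, $j=k+1,\dots,r$ (an $(s-k)\times(r-k)$ lower triangular matrix), $U^k_p=(\alpha^i_{i,j})$ with $i=k+1,\dots,r$, $j=k+1,\dots,p$ (an $(r-k)\times(p-k)$ upper triangular matrix), and the $(r-k)\times(r-k)$ diagonal matrix $D^k_{s,p}=\mathrm{diag}\big(\alpha^k(\alpha^{i-1}\alpha^{i})^{-1}\big)_{i=k+1,\dots,r}$ over $F$. Then $$\mathcal A^k_{s,p}=L^k_s\,D^k_{s,p}\,U^k_p,$$ i.e. for all $k<i\le s$, $k<j\le p$: $\alpha^{k+1}_{i,j}=\sum_{l=k+1}^{r}\alpha^l_{i,l}\,\alpha^k(\alpha^{l-1}\alpha^l)^{-1}\,\alpha^l_{l,j}$.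
   Context: For a matrix $A=(a_{i,j})\in R^{n\times m}$ and integers $k\ge1$, $1\le i\le n$, $1\le j\le m$, $\alpha^k_{i,j}$ denotes the $k\times k$ minor of $A$ formed by rows $1,2,\dots,k-1,i$ and columns $1,2,\dots,k-1,j$ (so it is $0$ if $i<k$ or $j<k$, because of a repeated row or column). Set $\alpha^0=1$ and $\alpha^k=\alpha^k_{k,k}$ (the $k$-th leading principal minor). For $0\le k<s\le n$ and $k<p\le m$, $\mathcal A^k_{s,p}$ denotes the $(s-k)\times(p-k)$ matrix $(\alpha^{k+1}_{i,j})_{i=k+1,\dots,s;\ j=k+1,\dots,p}$; in particular $\mathcal A^0_{n,m}=A$. *)

theory Defs
  imports "Jordan_Normal_Form.DL_Rank" "HOL-Computational_Algebra.Fraction_Field"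
begin

text \<open>Minors with the paper's 1-based indexing (JNF matrices are 0-based).
  alpha A k i j is the k x k minor of A formed by rows 1,...,k-1,i and
  columns 1,...,k-1,j (1-based), i.e. 0-based rows 0,...,k-2,i-1 and
  columns 0,...,k-2,j-1. If i < k (or j < k) a row (column) is repeated and the
  determinant is 0 automatically. For k = 0 this is the empty determinant 1.\<close>
definition alpha :: "'a::comm_ring_1 mat \<Rightarrow> nat \<Rightarrow> nat \<Rightarrow> nat \<Rightarrow> 'a" where
  "alpha A k i j = det (mat k k (\<lambda>(a, b).
      A $$ (if a < k - 1 then a else i - 1, if b < k - 1 then b else j - 1)))"

definition alpha_lead :: "'a::comm_ring_1 mat \<Rightarrow> nat \<Rightarrow> 'a" where
  "alpha_lead A k = (if k = 0 then 1 else alpha A k k k)"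

definition rank_frac :: "'a::idom mat \<Rightarrow> nat" where
  "rank_frac A = vec_space.rank (dim_row A) (map_mat to_fract A)"

end

theory Submission
  imports Defs "Jordan_Normal_Form.DL_Rank_Submatrix"
begin


lemma schur:
  fixes P :: "'a :: field mat"
  assumes P: "P \<in> carrier_mat l l" and Bm: "Bm \<in> carrier_mat l q" and C: "C \<in> carrier_mat q l"
    and D: "D \<in> carrier_mat q q" and QP: "Q * P = 1\<^sub>m l" and Q: "Q \<in> carrier_mat l l"
  shows "det (four_block_mat P Bm C D) = det P * det (D - C * Q * Bm)"
proof -
  define L where "L = four_block_mat (1\<^sub>m l) (0\<^sub>m l q) (- (C * Q)) (1\<^sub>m q)"
  have CQ: "C * Q \<in> carrier_mat q l" using C Q by (rule mult_carrier_mat)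
  have mCQ: "- (C * Q) \<in> carrier_mat q l" using CQ by (rule uminus_carrier_mat)
  have CQB: "C * Q * Bm \<in> carrier_mat q q" using CQ Bm by (rule mult_carrier_mat)
  have detL: "det L = 1" unfolding L_def
    by (subst det_four_block_mat_upper_right_zero[OF one_carrier_mat refl mCQ one_carrier_mat]) simp
  have e1: "1\<^sub>m l * P + 0\<^sub>m l q * C = P" using P C by simp
  have e2: "1\<^sub>m l * Bm + 0\<^sub>m l q * D = Bm" using Bm D by simp
  have e3: "- (C * Q) * P + 1\<^sub>m q * C = 0\<^sub>m q l"
  proof -
    have "- (C * Q) * P = - (C * Q * P)" using CQ P Bm by (subst uminus_mult_left_mat) auto
    also have "C * Q * P = C" using assoc_mult_mat[OF C Q P] QP C by simp
    finally show ?thesis using C by simp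
  qed
  have e4: "- (C * Q) * Bm + 1\<^sub>m q * D = D - C * Q * Bm"
  proof -
    have "- (C * Q) * Bm = - (C * Q * Bm)" using CQ P Bm by (subst uminus_mult_left_mat) auto
    thus ?thesis using D CQB by (simp add: minus_add_uminus_mat comm_add_mat[OF _ D])
  qed
  have LM: "L * four_block_mat P Bm C D = four_block_mat P Bm (0\<^sub>m q l) (D - C * Q * Bm)"
    unfolding L_def mult_four_block_mat[OF one_carrier_mat zero_carrier_mat mCQ one_carrier_mat P Bm C D]
    e1 e2 e3 e4 ..
  have Lc: "L \<in> carrier_mat (l+q) (l+q)" unfolding L_def by (rule four_block_carrier_mat[OF one_carrier_mat one_carrier_mat])
  have Mc: "four_block_mat P Bm C D \<in> carrier_mat (l+q) (l+q)" by (rule four_block_carrier_mat[OF P D])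
  have "det (L * four_block_mat P Bm C D) = det L * det (four_block_mat P Bm C D)"
    by (rule det_mult[OF Lc Mc])
  hence "det (four_block_mat P Bm C D) = det (four_block_mat P Bm (0\<^sub>m q l) (D - C * Q * Bm))"
    using LM detL by simp
  also have "\<dots> = det P * det (D - C * Q * Bm)"
    by (rule det_four_block_mat_lower_left_zero[OF P Bm refl]) (rule minus_carrier_mat[OF CQB])
  finally show ?thesis .
qed

lemma det2: assumes A: "(A :: 'a :: comm_ring_1 mat) \<in> carrier_mat 2 2"
  shows "det A = A$$(0,0)*A$$(1,1) - A$$(0,1)*A$$(1,0)"
proof -
  have "det A = (\<Sum>i<2. A $$ (i,0) * cofactor A i 0)"
    by (rule laplace_expansion_column[OF A]) simp
  also have "\<dots> = A $$ (0,0) * cofactor A 0 0 + A $$ (1,0) * cofactor A 1 0"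
    by (simp add: numeral_2_eq_2)
  also have "cofactor A 0 0 = A $$ (1,1)"
    unfolding cofactor_def using A by (simp add: det_single mat_delete_def)
  also have "cofactor A 1 0 = - A $$ (0,1)"
    unfolding cofactor_def using A by (simp add: det_single mat_delete_def)
  finally show ?thesis by (simp add: algebra_simps)
qed


definition mm :: "(nat \<Rightarrow> nat \<Rightarrow> 'b) \<Rightarrow> nat \<Rightarrow> nat \<Rightarrow> nat \<Rightarrow> 'b mat" where
  "mm f L i j = mat L L (\<lambda>(a,b). f (if a < L - 1 then a else i - 1) (if b < L - 1 then b else j - 1))"

definition lead :: "(nat \<Rightarrow> nat \<Rightarrow> 'b) \<Rightarrow> nat \<Rightarrow> 'b mat" where
  "lead f l = mat l l (\<lambda>(a,b). f a b)"

lemma triple_index: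
  fixes C :: "'a :: comm_ring_1 mat"
  assumes C: "C \<in> carrier_mat q l" and Q: "Q \<in> carrier_mat l l" and Bm: "Bm \<in> carrier_mat l q'"
    and a: "a < q" and b: "b < q'"
  shows "(C * Q * Bm) $$ (a,b) = (\<Sum>u\<in>{0..<l}. \<Sum>v\<in>{0..<l}. C $$ (a,u) * Q $$ (u,v) * Bm $$ (v,b))"
proof -
  show ?thesis using C Q Bm a b by (simp add: scalar_prod_def sum_distrib_left mult.assoc)
qed

lemma block_det:
  fixes f :: "nat \<Rightarrow> nat \<Rightarrow> 'a :: field"
  assumes QP: "Q * lead f l = 1\<^sub>m l" and Q: "Q \<in> carrier_mat l l"
  shows "det (mat (l+q) (l+q) (\<lambda>(a,b). f (if a < l then a else \<rho> (a - l)) (if b < l then b else \<gamma> (b - l))))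
    = det (lead f l) * det (mat q q (\<lambda>(a,b). f (\<rho> a) (\<gamma> b) -
        (\<Sum>u\<in>{0..<l}. \<Sum>v\<in>{0..<l}. f (\<rho> a) u * Q $$ (u,v) * f v (\<gamma> b))))"
proof -
  define Bm where "Bm = mat l q (\<lambda>(a,b). f a (\<gamma> b))"
  define C where "C = mat q l (\<lambda>(a,b). f (\<rho> a) b)"
  define D where "D = mat q q (\<lambda>(a,b). f (\<rho> a) (\<gamma> b))"
  have P: "lead f l \<in> carrier_mat l l" unfolding lead_def by simp
  have Bmc: "Bm \<in> carrier_mat l q" unfolding Bm_def by simp
  have Cc: "C \<in> carrier_mat q l" unfolding C_def by simp
  have Dc: "D \<in> carrier_mat q q" unfolding D_def by simp
  have eq: "mat (l+q) (l+q) (\<lambda>(a,b). f (if a < l then a else \<rho> (a - l)) (if b < l then b else \<gamma> (b - l)))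
     = four_block_mat (lead f l) Bm C D"
    by (rule eq_matI) (auto simp: lead_def Bm_def C_def D_def)
  have eq2: "D - C * Q * Bm = mat q q (\<lambda>(a,b). f (\<rho> a) (\<gamma> b) -
        (\<Sum>u\<in>{0..<l}. \<Sum>v\<in>{0..<l}. f (\<rho> a) u * Q $$ (u,v) * f v (\<gamma> b)))"
  proof (rule eq_matI)
    fix a b assume a: "a < dim_row (mat q q (\<lambda>(a,b). f (\<rho> a) (\<gamma> b) -
        (\<Sum>u\<in>{0..<l}. \<Sum>v\<in>{0..<l}. f (\<rho> a) u * Q $$ (u,v) * f v (\<gamma> b))))"
      and b: "b < dim_col (mat q q (\<lambda>(a,b). f (\<rho> a) (\<gamma> b) -
        (\<Sum>u\<in>{0..<l}. \<Sum>v\<in>{0..<l}. f (\<rho> a) u * Q $$ (u,v) * f v (\<gamma> b))))"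
    hence a: "a < q" and b: "b < q" by auto
    have "(C * Q * Bm) $$ (a,b) = (\<Sum>u\<in>{0..<l}. \<Sum>v\<in>{0..<l}. C $$ (a,u) * Q $$ (u,v) * Bm $$ (v,b))"
      by (rule triple_index[OF Cc Q Bmc a b])
    also have "\<dots> = (\<Sum>u\<in>{0..<l}. \<Sum>v\<in>{0..<l}. f (\<rho> a) u * Q $$ (u,v) * f v (\<gamma> b))"
      using a b by (intro sum.cong refl) (simp add: C_def Bm_def)
    finally have t: "(C * Q * Bm) $$ (a,b) = \<dots>" .
    have "(D - C * Q * Bm) $$ (a,b) = D $$ (a,b) - (C * Q * Bm) $$ (a,b)"
      using a b Cc Q Bmc Dc by simp
    then show "(D - C * Q * Bm) $$ (a,b) = mat q q (\<lambda>(a,b). f (\<rho> a) (\<gamma> b) -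
        (\<Sum>u\<in>{0..<l}. \<Sum>v\<in>{0..<l}. f (\<rho> a) u * Q $$ (u,v) * f v (\<gamma> b))) $$ (a,b)"
      using t a b by (simp add: D_def)
  qed (use Dc Cc Bmc in auto)
  show ?thesis unfolding eq eq2[symmetric]
    by (rule schur[OF P Bmc Cc Dc QP Q])
qed

lemma sylvester:
  fixes f :: "nat \<Rightarrow> nat \<Rightarrow> 'a :: field"
  assumes nz: "det (lead f l) \<noteq> 0"
  shows "det (mm f (l+2) i j) * det (lead f l) =
    det (mm f (l+1) (l+1) (l+1)) * det (mm f (l+1) i j) - det (mm f (l+1) i (l+1)) * det (mm f (l+1) (l+1) j)"
proof -
  define d where "d = det (lead f l)"
  define Q where "Q = (1 / d) \<cdot>\<^sub>m adj_mat (lead f l)"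
  have P: "lead f l \<in> carrier_mat l l" unfolding lead_def by simp
  note adj = adj_mat[OF P]
  have Q: "Q \<in> carrier_mat l l" unfolding Q_def using adj by simp
  have QP: "Q * lead f l = 1\<^sub>m l"
  proof -
    have "Q * lead f l = (1 / d) \<cdot>\<^sub>m (adj_mat (lead f l) * lead f l)"
      unfolding Q_def by (rule mult_smult_assoc_mat[OF adj(1) P])
    also have "\<dots> = 1\<^sub>m l" unfolding adj(3) d_def[symmetric]
      by (rule eq_matI) (use nz in \<open>auto simp: d_def\<close>)
    finally show ?thesis .
  qed
  define sc where "sc x y = f x y - (\<Sum>u\<in>{0..<l}. \<Sum>v\<in>{0..<l}. f x u * Q $$ (u,v) * f v y)" for x y
  have one: "det (mm f (l+1) x y) = d * sc (x - 1) (y - 1)" for x y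
  proof -
    have "mm f (l+1) x y = mat (l+1) (l+1) (\<lambda>(a,b). f (if a < l then a else (\<lambda>_. x - 1) (a - l))
       (if b < l then b else (\<lambda>_. y - 1) (b - l)))"
      unfolding mm_def by simp
    then have "det (mm f (l+1) x y) = d * det (mat 1 1 (\<lambda>(a,b). f ((\<lambda>_. x - 1) a) ((\<lambda>_. y - 1) b) -
        (\<Sum>u\<in>{0..<l}. \<Sum>v\<in>{0..<l}. f ((\<lambda>_. x - 1) a) u * Q $$ (u,v) * f v ((\<lambda>_. y - 1) b))))"
      using block_det[OF QP Q, where q=1 and \<rho>="\<lambda>_. x - 1" and \<gamma>="\<lambda>_. y - 1"] unfolding d_def by simp
    also have "\<dots> = d * sc (x - 1) (y - 1)"
      by (subst det_single) (auto simp: sc_def)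
    finally show ?thesis .
  qed
  define \<rho> where "\<rho> t = (if t = 0 then l else i - 1)" for t :: nat
  define \<gamma> where "\<gamma> t = (if t = 0 then l else j - 1)" for t :: nat
  have "mm f (l+2) i j = mat (l+2) (l+2) (\<lambda>(a,b). f (if a < l then a else \<rho> (a - l))
       (if b < l then b else \<gamma> (b - l)))"
    unfolding mm_def \<rho>_def \<gamma>_def by (rule eq_matI) auto
  then have "det (mm f (l+2) i j) = d * det (mat 2 2 (\<lambda>(a,b). f (\<rho> a) (\<gamma> b) -
        (\<Sum>u\<in>{0..<l}. \<Sum>v\<in>{0..<l}. f (\<rho> a) u * Q $$ (u,v) * f v (\<gamma> b))))"
    using block_det[OF QP Q, where q=2 and \<rho>=\<rho> and \<gamma>=\<gamma>] unfolding d_def by simp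
  also have "\<dots> = d * (sc l l * sc (i - 1) (j - 1) - sc l (j - 1) * sc (i - 1) l)"
    by (subst det2) (auto simp: sc_def \<rho>_def \<gamma>_def)
  finally have two: "det (mm f (l+2) i j) = \<dots>" .
  show ?thesis unfolding two one d_def[symmetric] by (simp add: algebra_simps)
qed

lemma pick_aux: assumes "r \<le> x" shows "a \<le> r \<Longrightarrow> pick (insert x {..<r}) a = (if a < r then a else x)"
proof (induction a)
  case 0
  show ?case
  proof (cases "r = 0")
    case True thus ?thesis by (auto intro!: Least_equality)
  next
    case False thus ?thesis by (auto intro!: Least_equality)
  qed
next
  case (Suc a)
  hence IH: "pick (insert x {..<r}) a = a" by simp
  show ?case
  proof (cases "Suc a < r")
    case True thus ?thesis using IH by (auto intro!: Least_equality)
  next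
    case False
    hence "Suc a = r" using Suc.prems by simp
    thus ?thesis using IH assms by (auto intro!: Least_equality)
  qed
qed

lemma tele:
  fixes g d x :: "nat \<Rightarrow> 'a :: field"
  assumes nz: "\<And>l. k \<le> l \<Longrightarrow> l \<le> r \<Longrightarrow> d l \<noteq> 0"
    and step: "\<And>l. k \<le> l \<Longrightarrow> l < r \<Longrightarrow> g (l+1) * d l = d (l+1) * g l - x l"
    and base: "g r = 0"
  shows "k \<le> kk \<Longrightarrow> kk \<le> r \<Longrightarrow> g kk / d kk = (\<Sum>l = Suc kk..r. x (l - 1) / (d (l - 1) * d l))"
proof (induction "r - kk" arbitrary: kk)
  case 0
  hence "kk = r" by simp
  thus ?case using base by simp
next
  case (Suc t)
  hence lt: "kk < r" by simp
  have IH: "g (kk+1) / d (kk+1) = (\<Sum>l = Suc (Suc kk)..r. x (l - 1) / (d (l - 1) * d l))"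
    using Suc by simp
  have s: "(\<Sum>l = Suc kk..r. x (l - 1) / (d (l - 1) * d l)) =
     x kk / (d kk * d (kk+1)) + (\<Sum>l = Suc (Suc kk)..r. x (l - 1) / (d (l - 1) * d l))"
    using lt by (subst sum.atLeast_Suc_atMost) auto
  have d1: "d kk \<noteq> 0" "d (kk+1) \<noteq> 0" using nz Suc.prems lt by auto
  have st: "g (kk+1) * d kk = d (kk+1) * g kk - x kk" using step Suc.prems lt by auto
  have "g (kk+1) / d (kk+1) = g kk / d kk - x kk / (d kk * d (kk+1))"
    using d1 st by (simp add: field_simps)
  thus ?case unfolding s IH[symmetric] by simp
qed

lemma to_fract_det: "to_fract (det M) = det (map_mat to_fract M)"
proof -
  interpret comm_ring_hom to_fract by unfold_locales auto
  show ?thesis by simp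
qed



lemma alpha_eq: "to_fract (alpha A l i j) = det (mm (\<lambda>x y. to_fract (A $$ (x,y))) l i j)"
  unfolding alpha_def to_fract_det mm_def by (rule arg_cong[where f=det], rule eq_matI) auto

lemma if_lt: "a < l \<Longrightarrow> (if a < l - 1 then a else l - 1) = (a::nat)"
  by auto

lemma mm_lead: "mm f l l l = lead f l"
proof (rule eq_matI)
  fix a b assume "a < dim_row (lead f l)" "b < dim_col (lead f l)"
  hence ab: "a < l" "b < l" by (auto simp: lead_def)
  have "mm f l l l $$ (a,b) = f (if a < l - 1 then a else l - 1) (if b < l - 1 then b else l - 1)"
    using ab by (simp add: mm_def del: One_nat_def)
  also have "\<dots> = f a b" unfolding if_lt[OF ab(1)] if_lt[OF ab(2)] ..
  finally show "mm f l l l $$ (a,b) = lead f l $$ (a,b)" using ab by (simp add: lead_def)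
qed (auto simp: mm_def lead_def)

lemma lead_eq: "to_fract (alpha_lead A l) = det (lead (\<lambda>x y. to_fract (A $$ (x,y))) l)"
proof (cases "l = 0")
  case True
  have "lead (\<lambda>x y. to_fract (A $$ (x,y))) l \<in> carrier_mat 0 0" unfolding lead_def True by simp
  thus ?thesis unfolding alpha_lead_def using True by simp
next
  case False
  hence "alpha_lead A l = alpha A l l l" by (simp add: alpha_lead_def)
  thus ?thesis using alpha_eq[of A l l l, unfolded mm_lead] by simp
qed

lemma zero_minor:
  assumes A: "A \<in> carrier_mat n m" and rk: "rank_frac A = r"
    and i: "1 \<le> i" "i \<le> n" and j: "1 \<le> j" "j \<le> m"
  shows "det (mm (\<lambda>x y. to_fract (A $$ (x,y))) (r+1) i j) = 0"
proof -
  define F where "F = (\<lambda>x y. to_fract (A $$ (x,y)))"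
  define M where "M = mm F (r+1) i j"
  have Mc: "M \<in> carrier_mat (r+1) (r+1)" unfolding M_def mm_def by simp
  show ?thesis
  proof (cases "i \<le> r")
    case True
    have "row M r = row M (i - 1)"
      by (rule eq_vecI) (use True in \<open>auto simp: M_def mm_def\<close>)
    hence "det M = 0" by (intro det_identical_rows[OF Mc, of r "i - 1"]) (use True i in auto)
    thus ?thesis unfolding M_def F_def .
  next
    case Fi: False
    show ?thesis
    proof (cases "j \<le> r")
      case True
      have "col M r = col M (j - 1)"
        by (rule eq_vecI) (use True in \<open>auto simp: M_def mm_def\<close>)
      hence "det M = 0" by (intro det_identical_columns[OF Mc, of r "j - 1"]) (use True j in auto)
      thus ?thesis unfolding M_def F_def .
    next
      case Fj: False
      define B where "B = map_mat to_fract A"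
      have Bc: "B \<in> carrier_mat n m" unfolding B_def using A by simp
      define I where "I = insert (i - 1) {..<r}"
      define J where "J = insert (j - 1) {..<r}"
      have ri: "r \<le> i - 1" "i - 1 < n" using Fi i by auto
      have rj: "r \<le> j - 1" "j - 1 < m" using Fj j by auto
      have cI: "{y. y < dim_row B \<and> y \<in> I} = I" unfolding I_def using Bc ri by auto
      have cJ: "{y. y < dim_col B \<and> y \<in> J} = J" unfolding J_def using Bc rj by auto
      have cardI: "card I = Suc r" unfolding I_def using ri by simp
      have cardJ: "card J = Suc r" unfolding J_def using rj by simp
      have sub: "submatrix B I J = M"
      proof (rule eq_matI)
        fix a b assume a: "a < dim_row M" and b: "b < dim_col M"
        hence a': "a \<le> r" and b': "b \<le> r" using Mc by auto
        have pa: "pick I a = (if a < r then a else i - 1)" unfolding I_def by (rule pick_aux[OF ri(1) a'])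
        have pb: "pick J b = (if b < r then b else j - 1)" unfolding J_def by (rule pick_aux[OF rj(1) b'])
        have "submatrix B I J $$ (a,b) = B $$ (pick I a, pick J b)"
          by (rule submatrix_index) (use a' b' cI cJ cardI cardJ in auto)
        also have "\<dots> = M $$ (a,b)" unfolding pa pb using a' b' ri rj A
          by (auto simp: B_def M_def mm_def F_def)
        finally show "submatrix B I J $$ (a,b) = M $$ (a,b)" .
      qed (use Mc cI cJ cardI cardJ in \<open>auto simp: dim_submatrix\<close>)
      show ?thesis
      proof (rule ccontr)
        assume "det (mm (\<lambda>x y. to_fract (A $$ (x, y))) (r + 1) i j) \<noteq> 0"
        hence "det (submatrix B I J) \<noteq> 0" unfolding sub M_def F_def .
        from vec_space.rank_gt_minor[OF Bc this]
        have "card {y. y < m \<and> y \<in> J} \<le> vec_space.rank n B" .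
        moreover have "vec_space.rank n B = r" using rk A unfolding rank_frac_def B_def by simp
        moreover have "{y. y < m \<and> y \<in> J} = J" using cJ Bc by simp
        ultimately show False using cardJ by simp
      qed
    qed
  qed
qed

theorem theorem2:
  fixes A :: "'a::idom mat" and n m r k s p :: nat
  assumes "A \<in> carrier_mat n m"
    and "rank_frac A = r"
    and "k < r"
    and "\<forall>i\<in>{k..r}. alpha_lead A i \<noteq> 0"
    and "k < s" and "s \<le> n" and "k < p" and "p \<le> m"
  shows "\<forall>i\<in>{k+1..s}. \<forall>j\<in>{k+1..p}.
    to_fract (alpha A (k+1) i j) =
      (\<Sum>l = k+1..r. to_fract (alpha A l i l) * to_fract (alpha_lead A k)
          / (to_fract (alpha_lead A (l-1)) * to_fract (alpha_lead A l))
          * to_fract (alpha A l l j))"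
proof (intro ballI)
  fix i j assume i: "i \<in> {k+1..s}" and j: "j \<in> {k+1..p}"
  define F where "F = (\<lambda>x y. to_fract (A $$ (x,y)))"
  define d where "d l = det (lead F l)" for l
  define g where "g l = det (mm F (l+1) i j)" for l
  define x where "x l = det (mm F (l+1) i (l+1)) * det (mm F (l+1) (l+1) j)" for l
  have nz: "d l \<noteq> 0" if "k \<le> l" "l \<le> r" for l
    using assms(4) that lead_eq[of A l] unfolding d_def F_def by auto
  have step: "g (l+1) * d l = d (l+1) * g l - x l" if "k \<le> l" "l < r" for l
  proof -
    have "det (mm F (l+2) i j) * det (lead F l) =
      det (mm F (l+1) (l+1) (l+1)) * det (mm F (l+1) i j) - det (mm F (l+1) i (l+1)) * det (mm F (l+1) (l+1) j)"
      by (rule sylvester) (use nz that in \<open>simp add: d_def\<close>)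
    thus ?thesis unfolding g_def d_def x_def mm_lead by (simp add: add.assoc)
  qed
  have base: "g r = 0" unfolding g_def F_def
    by (rule zero_minor[OF assms(1,2)]) (use i j assms in auto)
  have T: "g k / d k = (\<Sum>l = Suc k..r. x (l - 1) / (d (l - 1) * d l))"
    by (rule tele[of k r d g x, OF nz step base]) (use assms in auto)
  have "(\<Sum>l = k+1..r. to_fract (alpha A l i l) * to_fract (alpha_lead A k)
          / (to_fract (alpha_lead A (l-1)) * to_fract (alpha_lead A l))
          * to_fract (alpha A l l j)) = (\<Sum>l = Suc k..r. d k * (x (l - 1) / (d (l - 1) * d l)))"
  proof (rule sum.cong)
    fix l assume l: "l \<in> {Suc k..r}"
    hence l1: "l - 1 + 1 = l" by auto
    show "to_fract (alpha A l i l) * to_fract (alpha_lead A k)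
          / (to_fract (alpha_lead A (l-1)) * to_fract (alpha_lead A l))
          * to_fract (alpha A l l j) = d k * (x (l - 1) / (d (l - 1) * d l))"
      unfolding alpha_eq lead_eq x_def l1 d_def F_def by simp
  qed simp
  also have "\<dots> = d k * (g k / d k)" unfolding T by (simp add: sum_distrib_left)
  also have "\<dots> = g k" using nz[of k] assms by simp
  also have "g k = to_fract (alpha A (k+1) i j)" unfolding g_def alpha_eq F_def ..
  finally show "to_fract (alpha A (k+1) i j) = (\<Sum>l = k+1..r. to_fract (alpha A l i l) * to_fract (alpha_lead A k)
          / (to_fract (alpha_lead A (l-1)) * to_fract (alpha_lead A l))
          * to_fract (alpha A l l j))" by simp
qed

end
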